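(* Let $A,B$ be commuting nilpotent $n\times n$ matrices with $\mathrm{sh}(B)=(\lambda_1,\lambda_2)$, $\lambda_1\ge\lambda_2\ge1$, and $\mathrm{sh}(A)=(\mu_1,\ldots,\mu_s)$. If $s>\lambda_1$, then $\mu_1\le\left\lceil\frac{\lambda_2}{s-\lambda_1}\right\rceil$.
   Context: $\mathbb{F}$ is an algebraically closed field of characteristic $0$ and matrices are over $\mathbb{F}$. For a nilpotent matrix $A$, $\mathrm{sh}(A)$ is the partition of $n$ given by the sizes of the Jordan blocks of its Jordan canonical form (so $s$ is the number of Jordan blocks of $A$ and $\mu_1$ its nilpotency index). *)

theory Defs
  imports Complex_Main "Jordan_Normal_Form.Jordan_Normal_Form_Uniqueness"
begin

definition nilpotent_mat :: "'a :: semiring_1 mat \<Rightarrow> bool" where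
  "nilpotent_mat A \<longleftrightarrow> (\<exists>k. A ^\<^sub>m k = 0\<^sub>m (dim_row A) (dim_col A))"

definition sh :: "'a :: semiring_1 mat \<Rightarrow> nat list" where
  "sh A = rev (sort (map fst (SOME n_as. jordan_nf A n_as)))"

end

theory Submission
  imports Defs "Jordan_Normal_Form.Jordan_Normal_Form_Existence" "Jordan_Normal_Form.DL_Rank"
begin



lemma monic_split:
  fixes p :: "'a :: field poly"
  assumes alg: "\<forall>p :: 'a poly. degree p \<ge> 1 \<longrightarrow> (\<exists>x. poly p x = 0)"
  shows "monic p \<Longrightarrow> \<exists>es. p = (\<Prod>e\<leftarrow>es. [:-e,1:])"
proof (induction "degree p" arbitrary: p)
  case 0
  have "p = 1" using monic_degree_0[of p] 0(1)[symmetric] 0(2) by simp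
  then show ?case by (intro exI[of _ "[]"]) simp
next
  case (Suc d)
  have "degree p \<ge> 1" using Suc(2)[symmetric] by simp
  then obtain x where x: "poly p x = 0" using alg[rule_format, of p] by auto
  then have "[:-x,1:] dvd p" using dvd_iff_poly_eq_0[of "-x" p] by simp
  then obtain q where q: "p = [:-x,1:] * q" by (rule dvdE)
  have q0: "q \<noteq> 0" using q Suc(3) by auto
  have "degree p = 1 + degree q" unfolding q by (subst degree_mult_eq, insert q0, auto)
  hence dq: "d = degree q" using Suc(2) by simp
  have "lead_coeff p = lead_coeff q" unfolding q lead_coeff_mult by simp
  hence "monic q" using Suc(3) by simp
  from Suc(1)[OF dq this] obtain es where "q = (\<Prod>e\<leftarrow>es. [:-e,1:])" by blast
  then show ?case by (intro exI[of _ "x # es"]) (simp add: q)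
qed


lemma triangularizable:
  fixes A :: "'a :: field mat"
  assumes "A \<in> carrier_mat n n"
    and "char_poly A = (\<Prod>e\<leftarrow>es. [:-e,1:])"
  shows "\<exists>C. C \<in> carrier_mat n n \<and> upper_triangular C \<and> similar_mat A C"
  using assms
proof (induct es arbitrary: n A)
  case Nil
  with degree_monic_char_poly[of A n] have "n = 0" by auto
  with Nil have "similar_mat A A" "upper_triangular A" by (auto intro!: similar_mat_refl)
  with Nil show ?case by blast
next
  case (Cons e es n A)
  let ?n1 = "n - 1"
  from Cons have A: "A \<in> carrier_mat n n" and dim: "dim_row A = n" by auto
  let ?cp = "char_poly A"
  from Cons(3)
  have cp: "?cp = [: -e, 1 :] * (\<Prod>e \<leftarrow> es. [:- e, 1:])" by auto
  have mon: "monic (\<Prod>e\<leftarrow> es. [:- e, 1:])" by (rule monic_prod_list, auto)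
  have deg: "degree ?cp = Suc (degree (\<Prod>e\<leftarrow> es. [:- e, 1:]))" unfolding cp
    by (subst degree_mult_eq, insert mon, auto)
  with degree_monic_char_poly[OF A] have n: "n \<noteq> 0" by auto
  define v where "v = find_eigenvector A e"
  define b where "b = basis_completion v"
  define W where "W = mat_of_cols n b"
  have e: "eigenvalue A e" 
    unfolding eigenvalue_root_char_poly[OF A] cp by simp
  from find_eigenvector[OF A e] have ev: "eigenvector A v e" unfolding v_def .
  from this[unfolded eigenvector_def]
  have v[simp]: "v \<in> carrier_vec n" and v0: "v \<noteq> 0\<^sub>v n" and eigen: "A *\<^sub>v v = e \<cdot>\<^sub>v v" using A by auto
  interpret vec_space "TYPE('a)" n .
  from basis_completion[OF v v0, folded b_def]
  have dist_b: "distinct b" 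
    and indep: "\<not> lin_dep (set b)" and b: "set b \<subseteq> carrier_vec n" and hdb: "hd b = v" 
    and len_b: "length b = n" by auto
  have W: "W \<in> carrier_mat n n" unfolding W_def using len_b by auto
  have colsW: "cols W = b" unfolding W_def using b by simp
  have "rank W = n" by (rule lin_indpt_full_rank[OF W], insert dist_b indep colsW, auto)
  hence "det W \<noteq> 0" using det_rank_iff[OF W] by auto
  from det_non_zero_imp_unit[OF W this, of n]
  obtain W' where W': "W' \<in> carrier_mat n n" and W'W: "W' * W = 1\<^sub>m n" and WW': "W * W' = 1\<^sub>m n"
    unfolding Units_def ring_mat_def by auto
  define A' where "A' = W' * A * W"
  have A': "A' \<in> carrier_mat n n" using W W' A unfolding A'_def by auto
  have A'A_wit: "similar_mat_wit A' A W' W"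
    by (rule similar_mat_witI[of _ _ n], insert W W' A A' W'W WW', auto simp: A'_def)
  hence A'A: "similar_mat A' A" unfolding similar_mat_def by blast
  from similar_mat_wit_sym[OF A'A_wit] have simAA': "similar_mat_wit A A' W W'" by auto
  let ?f = "(\<lambda> i. if i = 0 then e else 0)"
  have colW0: "col W 0 = v" unfolding W_def using n len_b hdb b
    by (subst col_mat_of_cols, auto simp: hd_conv_nth)
  have col0: "col A' 0 = vec n ?f"
  proof -
    have AW: "A * W \<in> carrier_mat n n" using A W by auto
    have "col A' 0 = col (W' * (A * W)) 0" unfolding A'_def using W W' A by (simp add: assoc_mult_mat)
    also have "\<dots> = W' *\<^sub>v col (A * W) 0" by (rule col_mult2[OF W' AW], insert n, simp)
    also have "col (A * W) 0 = A *\<^sub>v col W 0" by (rule col_mult2[OF A W], insert n, simp)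
    finally have "col A' 0 = W' *\<^sub>v (A *\<^sub>v col W 0)" .
    also have "\<dots> = e \<cdot>\<^sub>v (W' *\<^sub>v col W 0)" unfolding colW0 eigen using mult_mat_vec[OF W' v] by simp
    also have "W' *\<^sub>v col W 0 = col (W' * W) 0" by (rule col_mult2[OF W' W, symmetric], insert n, simp)
    also have "\<dots> = unit_vec n 0" unfolding W'W using n by simp
    finally show ?thesis by (auto simp: unit_vec_def)
  qed
  obtain A1 A2 A0 A3 where splitA': "split_block A' 1 1 = (A1,A2,A0,A3)"
    by (cases "split_block A' 1 1", auto)
  from A' n have "dim_row A' = 1 + ?n1" "dim_col A' = 1 + ?n1" by auto
  from split_block[OF splitA' this] have A2: "A2 \<in> carrier_mat 1 ?n1"
    and A3: "A3 \<in> carrier_mat ?n1 ?n1" 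
    and A'block: "A' = four_block_mat A1 A2 A0 A3" by auto
  have A1id: "A1 = mat 1 1 (\<lambda> _. e)"
    using splitA'[unfolded split_block_def Let_def] arg_cong[OF col0, of "\<lambda> v. v $ 0"] A' n
    by (auto simp: col_def)
  have A1: "A1 \<in> carrier_mat 1 1" unfolding A1id by auto
  {
    fix i
    assume "i < ?n1"
    with arg_cong[OF col0, of "\<lambda> v. v $ Suc i"] A'
    have "A' $$ (Suc i, 0) = 0" by auto
  } note A'0 = this
  have A0id: "A0 = 0\<^sub>m ?n1 1"
    using splitA'[unfolded split_block_def Let_def] A'0 A' by auto
  have A0: "A0 \<in> carrier_mat ?n1 1" unfolding A0id by auto
  from cp char_poly_similar[OF A'A]
  have cp: "char_poly A' = [: -e,1 :] * (\<Prod> e \<leftarrow> es. [:- e, 1:])" by simp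
  also have "char_poly A' = char_poly A1 * char_poly A3" 
    unfolding A'block A0id
    by (rule char_poly_four_block_zeros_col[OF A1 A2 A3])
  also have "char_poly A1 = [: -e,1 :]"
    by (simp add: A1id char_poly_defs det_def sign_def)
  finally have cp: "char_poly A3 = (\<Prod> e \<leftarrow> es. [:- e, 1:])"
    by (metis mult_cancel_left pCons_eq_0_iff zero_neq_one)
  from Cons(1)[OF A3 cp] obtain B where B: "B \<in> carrier_mat ?n1 ?n1" and ut: "upper_triangular B"
    and sim3: "similar_mat A3 B" by blast
  from sim3 obtain P' Q' where simIH: "similar_mat_wit A3 B P' Q'" unfolding similar_mat_def by blast
  from similar_mat_witD2[OF A3 simIH] 
  have P': "P' \<in> carrier_mat ?n1 ?n1" and Q': "Q' \<in> carrier_mat ?n1 ?n1" 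
    and PQ': "P' * Q' = 1\<^sub>m ?n1" by auto
  let ?P' = "four_block_mat (1\<^sub>m 1) (0\<^sub>m 1 ?n1) (0\<^sub>m ?n1 1) P'"
  let ?Q' = "four_block_mat (1\<^sub>m 1) (0\<^sub>m 1 ?n1) (0\<^sub>m ?n1 1) Q'"
  define C where "C = four_block_mat A1 (A2 * P') A0 B"
  have A0_eq: "A0 = P' * A0 * 1\<^sub>m 1" unfolding A0id using P' by auto
  have simA'C: "similar_mat_wit A' C ?P' ?Q'" unfolding A'block C_def
    by (rule similar_mat_wit_four_block[OF similar_mat_wit_refl[OF A1] simIH _ A0_eq A1 A3 A0],
    insert PQ' A2 P' Q', auto)
  have ut1: "upper_triangular A1" unfolding A1id by auto
  have utC: "upper_triangular C" unfolding C_def A0id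
    by (intro upper_triangular_four_block[OF _ B ut1 ut], auto simp: A1id)
  have "similar_mat A C" using similar_mat_wit_trans[OF simAA' simA'C] unfolding similar_mat_def by blast
  moreover have "C \<in> carrier_mat n n" unfolding C_def using A1 A2 P' B A0 n
    by (auto intro!: four_block_carrier_mat simp del: four_block_carrier_mat)
  ultimately show ?case using utC by blast
qed


lemma jnf_exists:
  fixes A :: "'a :: field mat"
  assumes alg: "\<forall>p :: 'a poly. degree p \<ge> 1 \<longrightarrow> (\<exists>x. poly p x = 0)"
    and A: "A \<in> carrier_mat n n"
  shows "\<exists>ns. jordan_nf A ns"
proof -
  from degree_monic_char_poly[OF A] have "monic (char_poly A)" by auto
  from monic_split[OF alg this] obtain es where es: "char_poly A = (\<Prod>e\<leftarrow>es. [:-e,1:])" by blast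
  from triangularizable[OF A es] obtain C where C: "C \<in> carrier_mat n n" "upper_triangular C"
    "similar_mat A C" by blast
  from triangular_to_jnf_vector[OF C(1,2)] have "jordan_nf C (triangular_to_jnf_vector C)" .
  hence "jordan_nf A (triangular_to_jnf_vector C)" using C(3) unfolding jordan_nf_def
    using similar_mat_trans by blast
  thus ?thesis by blast
qed

lemma kernel_dim_zero: "kernel_dim (0\<^sub>m n n :: 'a :: field mat) = n"
proof -
  have "(jordan_block n (0::'a)) ^\<^sub>m n = 0\<^sub>m n n"
    unfolding jordan_block_zero_pow by (rule eq_matI, auto)
  with dim_kernel_zero_jordan_block_pow[where 'a='a, of n "n"]
  have "kernel.dim n (0\<^sub>m n n :: 'a mat) = n" by simp
  thus ?thesis unfolding kernel_dim_def by simp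
qed

lemma char_matrix_0: "A \<in> carrier_mat n n \<Longrightarrow> char_matrix A 0 = A"
  unfolding char_matrix_def by (rule eq_matI, auto)

lemma sum_filter_min_le:
  "(\<Sum>m\<leftarrow>map fst [(m, e)\<leftarrow>ns . e = ev]. min N m) \<le> sum_list (map fst (ns :: (nat \<times> 'b) list))"
  by (induct ns, auto)

lemma sum_filter_min_ge:
  assumes "\<forall>x\<in>set ns. fst x > 0"
    and "(\<Sum>m\<leftarrow>map fst [(m, e)\<leftarrow>ns . e = ev]. min N m) \<ge> sum_list (map fst (ns :: (nat \<times> 'b) list))"
  shows "\<forall>x\<in>set ns. snd x = ev \<and> fst x \<le> N"
  using assms
proof (induct ns)
  case (Cons x ns)
  obtain m e where x: "x = (m,e)" by force
  note le = sum_filter_min_le[of N ev ns]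
  show ?case
  proof (cases "e = ev")
    case True
    with Cons(3) x have "min N m + (\<Sum>m\<leftarrow>map fst [(m, e)\<leftarrow>ns . e = ev]. min N m)
       \<ge> m + sum_list (map fst ns)" by simp
    with le have 1: "m \<le> N" and 2: "(\<Sum>m\<leftarrow>map fst [(m, e)\<leftarrow>ns . e = ev]. min N m) \<ge> sum_list (map fst ns)"
      by linarith+
    from Cons(1)[OF _ 2] Cons(2) 1 True x show ?thesis by auto
  next
    case False
    with Cons(3) x have "(\<Sum>m\<leftarrow>map fst [(m, e)\<leftarrow>ns . e = ev]. min N m)
       \<ge> m + sum_list (map fst ns)" by simp
    moreover have "m > 0" using Cons(2) x by auto
    ultimately show ?thesis using le by linarith
  qed
qed simp

lemma nilpotent_jnf:
  fixes A :: "'a :: field mat"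
  assumes alg: "\<forall>p :: 'a poly. degree p \<ge> 1 \<longrightarrow> (\<exists>x. poly p x = 0)"
    and A: "A \<in> carrier_mat n n"
    and nil: "nilpotent_mat A"
  defines "ns \<equiv> SOME ns. jordan_nf A ns"
  shows "jordan_nf A ns" "\<forall>x\<in>set ns. snd x = 0 \<and> fst x > 0" "sum_list (map fst ns) = n"
    "\<And>k. kernel_dim (A ^\<^sub>m k) = sum_list (map (min k) (map fst ns))"
proof -
  from jnf_exists[OF alg A] have jnf: "jordan_nf A ns" unfolding ns_def by (rule someI_ex)
  thus "jordan_nf A ns" .
  from jnf[unfolded jordan_nf_def] have pos: "\<forall>x\<in>set ns. fst x > 0"
    by (metis image_eqI neq0_conv)
  from jnf[unfolded jordan_nf_def] have "similar_mat A (jordan_matrix ns)" by auto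
  from similar_matD[OF this] obtain m where "A \<in> carrier_mat m m" "jordan_matrix ns \<in> carrier_mat m m"
    by auto
  with A show sum: "sum_list (map fst ns) = n" unfolding carrier_mat_def by auto
  from nil[unfolded nilpotent_mat_def] obtain N where N: "A ^\<^sub>m N = 0\<^sub>m n n" using A by auto
  have dg: "\<And>k. dim_gen_eigenspace A 0 k = kernel_dim (A ^\<^sub>m k)"
    unfolding dim_gen_eigenspace_def char_matrix_0[OF A] ..
  from dim_gen_eigenspace[OF jnf, of 0 N, unfolded dg N kernel_dim_zero]
  have "(\<Sum>m\<leftarrow>map fst [(m, e)\<leftarrow>ns . e = 0]. min N m) \<ge> sum_list (map fst ns)" using sum by simp
  from sum_filter_min_ge[OF pos this] have ev: "\<forall>x\<in>set ns. snd x = 0" by auto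
  with pos show "\<forall>x\<in>set ns. snd x = 0 \<and> fst x > 0" by auto
  fix k
  have "filter (\<lambda>(m, e). e = 0) ns = ns" using ev by (intro filter_True, auto)
  with dim_gen_eigenspace[OF jnf, of 0 k, unfolded dg]
  show "kernel_dim (A ^\<^sub>m k) = sum_list (map (min k) (map fst ns))" by simp
qed



lemma mat_kernel_submodule:
  fixes X :: "'a :: field mat"
  assumes X: "X \<in> carrier_mat n n"
  shows "submodule class_ring (mat_kernel X) (module_vec TYPE('a) n)"
proof -
  interpret K: kernel n n X by (unfold_locales, rule X)
  show ?thesis
    apply (unfold_locales)
    using X mult_add_distrib_mat_vec[OF X] mult_mat_vec[OF X] mat_kernel[OF X]
    by (auto simp: class_ring_simps module_vec_simps)
qed

lemma kernel_dim_mono: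
  fixes X Y :: "'a :: field mat"
  assumes X: "X \<in> carrier_mat n n" and Y: "Y \<in> carrier_mat n n"
    and sub: "mat_kernel X \<subseteq> mat_kernel Y"
  shows "kernel_dim X \<le> kernel_dim Y" "kernel_dim X = kernel_dim Y \<Longrightarrow> mat_kernel X = mat_kernel Y"
proof -
  interpret KX: kernel n n X by (unfold_locales, rule X)
  interpret KY: kernel n n Y by (unfold_locales, rule Y)
  obtain BX where fBX: "finite BX" and bX: "KX.basis BX" using kernel_basis_exists[OF X] by blast
  obtain BY where fBY: "finite BY" and bY: "KY.basis BY" using kernel_basis_exists[OF Y] by blast
  from bX have BXX: "BX \<subseteq> mat_kernel X" and liX: "\<not> KX.lin_dep BX" and spX: "KX.span BX = mat_kernel X"
    unfolding KX.Ker.basis_def by auto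
  from bY have BYY: "BY \<subseteq> mat_kernel Y" and spY: "KY.span BY = mat_kernel Y"
    unfolding KY.Ker.basis_def by auto
  have subX: "submodule class_ring (mat_kernel X) (module_vec TYPE('a) n)" by (rule mat_kernel_submodule[OF X])
  have subY: "submodule class_ring (mat_kernel Y) (module_vec TYPE('a) n)" by (rule mat_kernel_submodule[OF Y])
  have BXY: "BX \<subseteq> mat_kernel Y" using BXX sub by auto
  have ldX: "KX.lin_dep BX = KX.NC.lin_dep BX" by (rule KX.NC.span_li_not_depend(2)[OF BXX subX])
  have ldY: "KY.lin_dep BX = KX.NC.lin_dep BX" by (rule KX.NC.span_li_not_depend(2)[OF BXY subY])
  have liY: "\<not> KY.lin_dep BX" using liX ldX ldY by simp
  have fd: "KY.Ker.fin_dim" unfolding KY.Ker.fin_dim_def using fBY BYY spY by auto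
  have dX: "kernel_dim X = card BX" using KX.Ker.dim_basis[OF fBX bX] by simp
  have le: "card BX \<le> KY.dim" by (rule KY.Ker.li_le_dim(2)[OF fd BXY liY])
  thus "kernel_dim X \<le> kernel_dim Y" using dX by simp
  assume eq: "kernel_dim X = kernel_dim Y"
  have "KY.basis BX" by (rule KY.Ker.dim_li_is_basis[OF fd fBX BXY liY], insert eq dX, simp)
  hence spY': "KY.span BX = mat_kernel Y" unfolding KY.Ker.basis_def by auto
  have "KX.span BX = KX.NC.span BX" by (rule KX.NC.span_li_not_depend(1)[OF BXX subX])
  moreover have "KY.span BX = KX.NC.span BX" by (rule KX.NC.span_li_not_depend(1)[OF BXY subY])
  ultimately show "mat_kernel X = mat_kernel Y" using spX spY' by simp
qed



lemma J2_pow: "(jordan_matrix [(a,0),(b,0)] :: 'a :: field mat) ^\<^sub>m k =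
  mat (a+b) (a+b) (\<lambda>(i,j). if j = i + k \<and> (i < a \<longleftrightarrow> j < a) then 1 else 0)"
  unfolding jordan_matrix_pow
  by (rule eq_matI, auto simp: jordan_block_zero_pow)


lemma J2_pow_vec:
  assumes y: "y \<in> carrier_vec (a+b)" and i: "i < a + b"
  shows "((jordan_matrix [(a,0),(b,0)] :: 'a :: field mat) ^\<^sub>m k *\<^sub>v y) $ i =
    (if i + k < a + b \<and> (i < a \<longleftrightarrow> i + k < a) then y $ (i+k) else 0)"
proof -
  have "((jordan_matrix [(a,0),(b,0)] :: 'a mat) ^\<^sub>m k *\<^sub>v y) $ i =
     (\<Sum>j\<in>{0..<a+b}. (if j = i + k \<and> (i < a \<longleftrightarrow> j < a) then 1 else 0) * y $ j)"
    unfolding J2_pow using i y by (simp add: scalar_prod_def)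
  also have "\<dots> = (\<Sum>j\<in>{0..<a+b}. if j = i + k then (if (i < a \<longleftrightarrow> i + k < a) then y $ (i+k) else 0) else 0)"
    by (rule sum.cong, auto)
  also have "\<dots> = (if i + k < a + b \<and> (i < a \<longleftrightarrow> i + k < a) then y $ (i+k) else 0)"
    by (subst sum.delta, auto)
  finally show ?thesis .
qed

lemma J2_F:
  fixes y :: "'a :: field vec"
  assumes y: "y \<in> carrier_vec (a+b)" and al: "a \<ge> l" and bl: "b \<ge> l" and rd: "r + d = l"
    and yr: "(jordan_matrix [(a,0),(b,0)] :: 'a mat) ^\<^sub>m r *\<^sub>v y = 0\<^sub>v (a+b)"
  shows "\<exists>z \<in> carrier_vec (a+b). (jordan_matrix [(a,0),(b,0)] :: 'a mat) ^\<^sub>m l *\<^sub>v z = 0\<^sub>v (a+b)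
     \<and> (jordan_matrix [(a,0),(b,0)] :: 'a mat) ^\<^sub>m d *\<^sub>v z = y"
proof -
  let ?J = "jordan_matrix [(a,0),(b,0)] :: 'a mat"
  have y0: "y $ j = 0" if j: "j < a + b" "(j < a \<and> j \<ge> r) \<or> (j \<ge> a \<and> j - a \<ge> r)" for j
  proof -
    have "(?J ^\<^sub>m r *\<^sub>v y) $ (j - r) = (0\<^sub>v (a+b) :: 'a vec) $ (j - r)" by (simp only: yr)
    also have "\<dots> = 0" using j by simp
    finally have "(?J ^\<^sub>m r *\<^sub>v y) $ (j - r) = 0" .
    moreover have jr: "j - r < a + b" using j by auto
    ultimately have "(if j - r + r < a + b \<and> (j - r < a \<longleftrightarrow> j - r + r < a) then y $ (j - r + r) else 0) = 0"
      using J2_pow_vec[OF y jr, of r] by simp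
    thus ?thesis using j by (auto split: if_splits)
  qed
  define z where "z = vec (a+b) (\<lambda>i. if (if i < a then i else i - a) \<ge> d then y $ (i - d) else 0)"
  have z: "z \<in> carrier_vec (a+b)" unfolding z_def by simp
  have 1: "?J ^\<^sub>m l *\<^sub>v z = 0\<^sub>v (a+b)"
  proof (rule eq_vecI)
    fix i assume i: "i < dim_vec (0\<^sub>v (a + b) :: 'a vec)"
    hence i: "i < a + b" by simp
    show "(?J ^\<^sub>m l *\<^sub>v z) $ i = 0\<^sub>v (a + b) $ i"
      unfolding J2_pow_vec[OF z i] using i al bl rd
      by (auto simp: z_def intro!: y0)
  qed (use z in simp)
  have 2: "?J ^\<^sub>m d *\<^sub>v z = y"
  proof (rule eq_vecI)
    fix i assume i: "i < dim_vec y"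
    hence i: "i < a + b" using y by simp
    show "(?J ^\<^sub>m d *\<^sub>v z) $ i = y $ i"
      unfolding J2_pow_vec[OF z i] using i al bl rd
      by (auto simp: z_def intro!: y0[symmetric]) (rule y0, linarith+)+
  qed (use z y in simp)
  show ?thesis using z 1 2 by blast
qed



lemma pow_mat_add: assumes A: "A \<in> carrier_mat n n"
  shows "A ^\<^sub>m (i + j) = A ^\<^sub>m i * A ^\<^sub>m j"
proof (induct j)
  case 0 then show ?case using A by simp
next
  case (Suc j)
  have "A ^\<^sub>m (i + Suc j) = A ^\<^sub>m (i + j) * A" by simp
  also have "\<dots> = A ^\<^sub>m i * A ^\<^sub>m j * A" using Suc by simp
  also have "\<dots> = A ^\<^sub>m i * (A ^\<^sub>m j * A)" using A by (intro assoc_mult_mat[of _ n n _ n _ n], auto)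
  finally show ?case by simp
qed

lemma commute_pow: assumes A: "A \<in> carrier_mat n n" and B: "B \<in> carrier_mat n n"
  and AB: "A * B = B * A"
  shows "A * B ^\<^sub>m k = B ^\<^sub>m k * A"
proof (induct k)
  case 0 then show ?case using A B by simp
next
  case (Suc k)
  have Bk: "B ^\<^sub>m k \<in> carrier_mat n n" using B by simp
  have "A * B ^\<^sub>m Suc k = (A * B ^\<^sub>m k) * B" using A B Bk by (simp add: assoc_mult_mat[of _ n n _ n _ n])
  also have "\<dots> = B ^\<^sub>m k * (A * B)" unfolding Suc using A B Bk by (simp add: assoc_mult_mat[of _ n n _ n _ n])
  also have "\<dots> = (B ^\<^sub>m k * B) * A" unfolding AB using A B Bk by (simp add: assoc_mult_mat[of _ n n _ n _ n])
  finally show ?case by simp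
qed

lemma mat_zero_if_vec: fixes M :: "'a :: field mat" assumes M: "M \<in> carrier_mat n m"
  and z: "\<And>v. v \<in> carrier_vec m \<Longrightarrow> M *\<^sub>v v = 0\<^sub>v n"
  shows "M = 0\<^sub>m n m"
proof (rule eq_matI)
  fix i j assume i: "i < dim_row (0\<^sub>m n m :: 'a mat)" and j: "j < dim_col (0\<^sub>m n m :: 'a mat)"
  hence i: "i < n" and j: "j < m" by auto
  have "M $$ (i,j) = (M *\<^sub>v unit_vec m j) $ i" using M i j by simp
  also have "\<dots> = 0" using z[of "unit_vec m j"] i by simp
  finally show "M $$ (i,j) = 0\<^sub>m n m $$ (i,j)" using i j by simp
qed (use M in auto)

lemma step_a:
  fixes A B :: "'a :: field mat"
  assumes A: "A \<in> carrier_mat n n" and B: "B \<in> carrier_mat n n" and AB: "A * B = B * A"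
    and N: "B ^\<^sub>m N = 0\<^sub>m n n"
  shows "B ^\<^sub>m (n - kernel_dim A) * A = 0\<^sub>m n n"
proof -
  define C where "C = (\<lambda>j. B ^\<^sub>m j * A)"
  have C: "C j \<in> carrier_mat n n" for j unfolding C_def using A B by auto
  have CB: "C j * B = C (Suc j)" for j
  proof -
    have Bj: "B ^\<^sub>m j \<in> carrier_mat n n" using B by simp
    have "C j * B = B ^\<^sub>m j * (A * B)" unfolding C_def using A B Bj by (simp add: assoc_mult_mat[of _ n n _ n _ n])
    also have "\<dots> = (B ^\<^sub>m j * B) * A" unfolding AB using A B Bj by (simp add: assoc_mult_mat[of _ n n _ n _ n])
    finally show ?thesis unfolding C_def by simp
  qed
  have BC: "C (Suc j) = B * C j" for j
  proof -
    have "B ^\<^sub>m (Suc j) = B ^\<^sub>m (1 + j)" by simp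
    also have "\<dots> = B * B ^\<^sub>m j" unfolding pow_mat_add[OF B] using B by simp
    finally show ?thesis unfolding C_def using A B by (simp add: assoc_mult_mat[of _ n n _ n _ n])
  qed
  have mono: "mat_kernel (C j) \<subseteq> mat_kernel (C (Suc j))" for j
    unfolding BC by (rule mat_kernel_mult_subset[OF C B])
  have kerCv: "v \<in> mat_kernel (C j) \<longleftrightarrow> v \<in> carrier_vec n \<and> C j *\<^sub>v v = 0\<^sub>v n" for v j
    using mat_kernel[OF C[of j]] by auto
  have stable: "mat_kernel (C (Suc (Suc j))) = mat_kernel (C (Suc j))"
    if eq: "mat_kernel (C (Suc j)) = mat_kernel (C j)" for j
  proof
    show "mat_kernel (C (Suc j)) \<subseteq> mat_kernel (C (Suc (Suc j)))" by (rule mono)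
    show "mat_kernel (C (Suc (Suc j))) \<subseteq> mat_kernel (C (Suc j))"
    proof
      fix x assume "x \<in> mat_kernel (C (Suc (Suc j)))"
      hence x: "x \<in> carrier_vec n" and 0: "C (Suc (Suc j)) *\<^sub>v x = 0\<^sub>v n" using kerCv by auto
      have "C (Suc j) *\<^sub>v (B *\<^sub>v x) = C (Suc (Suc j)) *\<^sub>v x"
        using assoc_mult_mat_vec[OF C B x, of "Suc j"] CB[of "Suc j"] by simp
      hence "B *\<^sub>v x \<in> mat_kernel (C (Suc j))" using kerCv 0 B x by simp
      hence "B *\<^sub>v x \<in> mat_kernel (C j)" using eq by simp
      hence "C j *\<^sub>v (B *\<^sub>v x) = 0\<^sub>v n" using kerCv by simp
      moreover have "C j *\<^sub>v (B *\<^sub>v x) = C (Suc j) *\<^sub>v x"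
        using assoc_mult_mat_vec[OF C B x, of "j"] CB[of "j"] by simp
      ultimately show "x \<in> mat_kernel (C (Suc j))" using kerCv x by simp
    qed
  qed
  have stable_all: "mat_kernel (C (j + i)) = mat_kernel (C j)"
    if eq: "mat_kernel (C (Suc j)) = mat_kernel (C j)" for j i
  proof -
    have "mat_kernel (C (j + i)) = mat_kernel (C j) \<and> mat_kernel (C (Suc (j + i))) = mat_kernel (C (j + i))"
    proof (induct i)
      case 0 thus ?case using eq by simp
    next
      case (Suc i)
      thus ?case using stable[of "j + i"] by simp
    qed
    thus ?thesis by simp
  qed
  have ker0: "mat_kernel (0\<^sub>m n n :: 'a mat) = carrier_vec n" unfolding mat_kernel_def by auto
  have kdle: "kernel_dim (C j) \<le> n" for j
    using kernel_dim_mono(1)[OF C[of j], of "0\<^sub>m n n"] kernel_dim_zero[where 'a='a, of n] ker0 mat_kernel_carrier[OF C[of j]]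
    by auto
  have CN: "C (j + N) = 0\<^sub>m n n" for j
  proof -
    have "C (j + N) = B ^\<^sub>m j * B ^\<^sub>m N * A" unfolding C_def pow_mat_add[OF B] ..
    also have "\<dots> = 0\<^sub>m n n" unfolding N using A B by simp
    finally show ?thesis .
  qed
  have claim: "kernel_dim (C j) \<ge> min n (kernel_dim A + j)" for j
  proof (induct j)
    case 0 thus ?case unfolding C_def using A B by simp
  next
    case (Suc j)
    note m = kernel_dim_mono[OF C[of j] C[of "Suc j"] mono[of j]]
    show ?case
    proof (cases "kernel_dim (C j) = n")
      case True
      thus ?thesis using m(1) by simp
    next
      case False
      have "kernel_dim (C j) \<noteq> kernel_dim (C (Suc j))"
      proof
        assume "kernel_dim (C j) = kernel_dim (C (Suc j))"
        from m(2)[OF this] have "mat_kernel (C (Suc j)) = mat_kernel (C j)" by simp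
        from stable_all[OF this, of N] have "mat_kernel (C j) = carrier_vec n"
          unfolding CN ker0 by simp
        hence "mat_kernel (C j) = mat_kernel (0\<^sub>m n n)" unfolding ker0 .
        hence "kernel_dim (C j) = kernel_dim (0\<^sub>m n n :: 'a mat)"
          using kernel_dim_mono(1)[OF C[of j], of "0\<^sub>m n n"] kernel_dim_mono(1)[OF _ C[of j], of "0\<^sub>m n n"]
          by auto
        with False show False unfolding kernel_dim_zero by simp
      qed
      with m(1) have "kernel_dim (C (Suc j)) > kernel_dim (C j)" by simp
      with Suc False kdle[of j] show ?thesis by linarith
    qed
  qed
  have "kernel_dim A \<le> n" using kdle[of 0] unfolding C_def using A B by simp
  with claim[of "n - kernel_dim A"] kdle[of "n - kernel_dim A"]
  have full: "kernel_dim (C (n - kernel_dim A)) = n" by simp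
  have "mat_kernel (C (n - kernel_dim A)) = mat_kernel (0\<^sub>m n n)"
    by (rule kernel_dim_mono(2)[OF C _ _], insert full kernel_dim_zero[where 'a='a, of n] ker0 mat_kernel_carrier[OF C], auto)
  hence "\<And>v. v \<in> carrier_vec n \<Longrightarrow> C (n - kernel_dim A) *\<^sub>v v = 0\<^sub>v n" unfolding ker0 using kerCv by blast
  from mat_zero_if_vec[OF C this] show ?thesis unfolding C_def .
qed



lemma mat_vec_zero: "(M :: 'a :: field mat) \<in> carrier_mat nr nc \<Longrightarrow> M *\<^sub>v 0\<^sub>v nc = 0\<^sub>v nr"
  by (intro eq_vecI, auto simp: mult_mat_vec_def scalar_prod_def)

lemma F_B:
  fixes B :: "'a :: field mat"
  assumes B: "B \<in> carrier_mat n n"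
    and wit: "similar_mat_wit B (jordan_matrix [(a,0),(b,0)]) P Q"
    and n: "a + b = n" and al: "a \<ge> l" and bl: "b \<ge> l" and rd: "r + d = l"
    and y: "y \<in> carrier_vec n" and yr: "B ^\<^sub>m r *\<^sub>v y = 0\<^sub>v n"
  shows "\<exists>z \<in> carrier_vec n. B ^\<^sub>m l *\<^sub>v z = 0\<^sub>v n \<and> B ^\<^sub>m d *\<^sub>v z = y"
proof -
  define J where "J = (jordan_matrix [(a,0),(b,0)] :: 'a mat)"
  note D = similar_mat_witD2[OF B wit, folded J_def]
  have PQ: "P * Q = 1\<^sub>m n" and QP: "Q * P = 1\<^sub>m n" and J: "J \<in> carrier_mat n n"
    and P: "P \<in> carrier_mat n n" and Q: "Q \<in> carrier_mat n n" using D by blast+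
  have Bk: "B ^\<^sub>m k = P * J ^\<^sub>m k * Q" for k using similar_mat_wit_pow_id[OF wit] unfolding J_def by blast
  have Jk: "J ^\<^sub>m k \<in> carrier_mat n n" for k using J by (rule pow_carrier_mat)
  have QB: "Q * B ^\<^sub>m k = J ^\<^sub>m k * Q" for k
  proof -
    have PJ: "P * J ^\<^sub>m k \<in> carrier_mat n n" using P Jk by (rule mult_carrier_mat)
    have "Q * B ^\<^sub>m k = Q * (P * J ^\<^sub>m k * Q)" by (simp only: Bk)
    also have "\<dots> = Q * (P * J ^\<^sub>m k) * Q" using assoc_mult_mat[OF Q PJ Q] by simp
    also have "Q * (P * J ^\<^sub>m k) = (Q * P) * J ^\<^sub>m k" using assoc_mult_mat[OF Q P Jk] by simp
    also have "\<dots> = J ^\<^sub>m k" unfolding QP by (rule left_mult_one_mat[OF Jk])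
    finally show ?thesis .
  qed
  have BP: "B ^\<^sub>m k * P = P * J ^\<^sub>m k" for k
  proof -
    have PJ: "P * J ^\<^sub>m k \<in> carrier_mat n n" using P Jk by (rule mult_carrier_mat)
    have "B ^\<^sub>m k * P = (P * J ^\<^sub>m k * Q) * P" by (simp only: Bk)
    also have "\<dots> = P * J ^\<^sub>m k * (Q * P)" using assoc_mult_mat[OF PJ Q P] by simp
    also have "\<dots> = P * J ^\<^sub>m k" unfolding QP by (rule right_mult_one_mat[OF PJ])
    finally show ?thesis .
  qed
  have Bkc: "B ^\<^sub>m k \<in> carrier_mat n n" for k using B by (rule pow_carrier_mat)
  have Qy: "Q *\<^sub>v y \<in> carrier_vec n" using Q y by (rule mult_mat_vec_carrier)
  have "J ^\<^sub>m r *\<^sub>v (Q *\<^sub>v y) = (J ^\<^sub>m r * Q) *\<^sub>v y" using assoc_mult_mat_vec[OF Jk Q y] by simp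
  also have "\<dots> = (Q * B ^\<^sub>m r) *\<^sub>v y" by (simp only: QB)
  also have "\<dots> = Q *\<^sub>v (B ^\<^sub>m r *\<^sub>v y)" using assoc_mult_mat_vec[OF Q Bkc y] by simp
  also have "\<dots> = 0\<^sub>v n" unfolding yr by (rule mat_vec_zero[OF Q])
  finally have "J ^\<^sub>m r *\<^sub>v (Q *\<^sub>v y) = 0\<^sub>v (a + b)" unfolding n .
  from J2_F[OF Qy[folded n] al bl rd this[unfolded J_def]] obtain z' where
    z': "z' \<in> carrier_vec n" and z1: "J ^\<^sub>m l *\<^sub>v z' = 0\<^sub>v n" and z2: "J ^\<^sub>m d *\<^sub>v z' = Q *\<^sub>v y"
    unfolding n J_def by blast
  have Pz: "P *\<^sub>v z' \<in> carrier_vec n" using P z' by (rule mult_mat_vec_carrier)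
  have "B ^\<^sub>m l *\<^sub>v (P *\<^sub>v z') = (B ^\<^sub>m l * P) *\<^sub>v z'" using assoc_mult_mat_vec[OF Bkc P z'] by simp
  also have "\<dots> = (P * J ^\<^sub>m l) *\<^sub>v z'" by (simp only: BP)
  also have "\<dots> = P *\<^sub>v (J ^\<^sub>m l *\<^sub>v z')" using assoc_mult_mat_vec[OF P Jk z'] by simp
  also have "\<dots> = 0\<^sub>v n" unfolding z1 by (rule mat_vec_zero[OF P])
  finally have 1: "B ^\<^sub>m l *\<^sub>v (P *\<^sub>v z') = 0\<^sub>v n" .
  have "B ^\<^sub>m d *\<^sub>v (P *\<^sub>v z') = (B ^\<^sub>m d * P) *\<^sub>v z'" using assoc_mult_mat_vec[OF Bkc P z'] by simp
  also have "\<dots> = (P * J ^\<^sub>m d) *\<^sub>v z'" by (simp only: BP)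
  also have "\<dots> = P *\<^sub>v (J ^\<^sub>m d *\<^sub>v z')" using assoc_mult_mat_vec[OF P Jk z'] by simp
  also have "\<dots> = (P * Q) *\<^sub>v y" unfolding z2 using assoc_mult_mat_vec[OF P Q y] by simp
  also have "\<dots> = y" unfolding PQ using y by simp
  finally have 2: "B ^\<^sub>m d *\<^sub>v (P *\<^sub>v z') = y" .
  show ?thesis using Pz 1 2 by blast
qed



lemma sum_min1: "\<forall>x\<in>set xs. (x::nat) > 0 \<Longrightarrow> sum_list (map (min 1) xs) = length xs"
  by (induct xs, auto)
lemma len_le_sum: "\<forall>x\<in>set xs. (x::nat) > 0 \<Longrightarrow> length xs \<le> sum_list xs"
  by (induct xs, auto)
lemma sum_min_ge: "sum_list (map (min m) xs) \<ge> sum_list (xs :: nat list) \<Longrightarrow> \<forall>x\<in>set xs. x \<le> m"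
proof (induct xs)
  case (Cons x xs)
  have "sum_list (map (min m) xs) \<le> sum_list xs" by (induct xs, auto)
  with Cons(2) have "x \<le> m" "sum_list (map (min m) xs) \<ge> sum_list xs" by auto
  with Cons(1) show ?case by auto
qed simp

lemma zero_mat_vec: "v \<in> carrier_vec n \<Longrightarrow> (0\<^sub>m k n :: 'a :: field mat) *\<^sub>v v = 0\<^sub>v k"
  by (intro eq_vecI, auto simp: mult_mat_vec_def scalar_prod_def)

theorem proposition3p8:
  fixes A B :: "'a :: field_char_0 mat" and n l1 l2 :: nat
  assumes alg_closed: "\<forall>p :: 'a poly. degree p \<ge> 1 \<longrightarrow> (\<exists>x. poly p x = 0)"
    and A: "A \<in> carrier_mat n n" and B: "B \<in> carrier_mat n n"
    and comm: "A * B = B * A"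
    and nilA: "nilpotent_mat A" and nilB: "nilpotent_mat B"
    and shB: "sh B = [l1, l2]" and l12: "l1 \<ge> l2" and l2: "l2 \<ge> 1"
    and s: "length (sh A) > l1"
  shows "int (sh A ! 0) \<le> \<lceil>real l2 / real (length (sh A) - l1)\<rceil>"
proof -
  define nsA where "nsA = (SOME ns. jordan_nf A ns)"
  note jA = nilpotent_jnf[OF alg_closed A nilA, folded nsA_def]
  have shA: "sh A = rev (sort (map fst nsA))" unfolding sh_def nsA_def ..
  have posA: "\<forall>x\<in>set (map fst nsA). x > 0" using jA(2) by auto
  have kdA: "kernel_dim A = length nsA"
    using jA(4)[of 1] sum_min1[OF posA] A by simp
  define s where "s = length (sh A)"
  have s_def': "s = kernel_dim A" unfolding s_def shA kdA by simp
  have sn: "s \<le> n" unfolding s_def shA using len_le_sum[OF posA] jA(3) by simp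
  define nsB where "nsB = (SOME ns. jordan_nf B ns)"
  note jB = nilpotent_jnf[OF alg_closed B nilB, folded nsB_def]
  have "rev (sort (map fst nsB)) = [l1, l2]" using shB unfolding sh_def nsB_def .
  hence sortB: "sort (map fst nsB) = [l2, l1]" by (metis rev_rev_ident rev.simps append.simps)
  hence "length nsB = 2" by (metis length_map length_sort list.size(3,4) numeral_2_eq_2 One_nat_def add.commute plus_1_eq_Suc)
  then obtain x1 x2 where nsB: "nsB = [x1, x2]"
    by (cases nsB; cases "tl nsB"; auto)
  obtain p q where x1: "x1 = (p,0)" and x2: "x2 = (q,0)" using jB(2) unfolding nsB
    by (cases x1, cases x2, auto)
  have pq: "(p = l2 \<and> q = l1) \<or> (p = l1 \<and> q = l2)" using sortB unfolding nsB x1 x2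
    by (auto split: if_splits)
  have npq: "p + q = n" using jB(3) unfolding nsB x1 x2 by simp
  have nl: "n = l1 + l2" using npq pq by auto
  have pl: "p \<ge> l2" "q \<ge> l2" using pq l12 by auto
  from jB(1)[unfolded jordan_nf_def nsB x1 x2] obtain P Q where
    wit: "similar_mat_wit B (jordan_matrix [(p,0),(q,0)]) P Q" unfolding similar_mat_def by blast
  from nilB[unfolded nilpotent_mat_def] obtain N where N: "B ^\<^sub>m N = 0\<^sub>m n n" using B by auto
  define r where "r = n - s"
  define d where "d = s - l1"
  have sl1: "s > l1" using s unfolding s_def .
  have rd: "r + d = l2" unfolding r_def d_def using sn sl1 nl by linarith
  have d0: "d > 0" unfolding d_def using sl1 by simp
  have BrA: "B ^\<^sub>m r * A = 0\<^sub>m n n" unfolding r_def s_def' by (rule step_a[OF A B comm N])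
  have Bk: "\<And>k. B ^\<^sub>m k \<in> carrier_mat n n" using B by simp
  have Ak: "\<And>k. A ^\<^sub>m k \<in> carrier_mat n n" using A by simp
  have G: "\<exists>z \<in> carrier_vec n. B ^\<^sub>m l2 *\<^sub>v z = 0\<^sub>v n \<and> A *\<^sub>v v = B ^\<^sub>m d *\<^sub>v z"
    if v: "v \<in> carrier_vec n" for v
  proof -
    have Av: "A *\<^sub>v v \<in> carrier_vec n" using A v by simp
    have "B ^\<^sub>m r *\<^sub>v (A *\<^sub>v v) = (B ^\<^sub>m r * A) *\<^sub>v v" using assoc_mult_mat_vec[OF Bk A v] by simp
    also have "\<dots> = 0\<^sub>v n" unfolding BrA by (rule zero_mat_vec[OF v])
    finally have "B ^\<^sub>m r *\<^sub>v (A *\<^sub>v v) = 0\<^sub>v n" .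
    from F_B[OF B wit npq pl rd Av this] show ?thesis by metis
  qed
  have H: "\<exists>z \<in> carrier_vec n. B ^\<^sub>m l2 *\<^sub>v z = 0\<^sub>v n \<and> A ^\<^sub>m (Suc j) *\<^sub>v v = B ^\<^sub>m (Suc j * d) *\<^sub>v z"
    if v: "v \<in> carrier_vec n" for j v
    using v
  proof (induct j arbitrary: v)
    case 0
    have "A ^\<^sub>m (Suc 0) = A" using A by simp
    with G[OF 0] show ?case by simp
  next
    case (Suc j v)
    from G[OF Suc(2)] obtain z1 where z1: "z1 \<in> carrier_vec n" and Av: "A *\<^sub>v v = B ^\<^sub>m d *\<^sub>v z1" by blast
    from Suc(1)[OF z1] obtain z2 where z2: "z2 \<in> carrier_vec n" and z2l: "B ^\<^sub>m l2 *\<^sub>v z2 = 0\<^sub>v n"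
      and Az1: "A ^\<^sub>m (Suc j) *\<^sub>v z1 = B ^\<^sub>m (Suc j * d) *\<^sub>v z2" by blast
    have comm': "A ^\<^sub>m (Suc j) * B ^\<^sub>m d = B ^\<^sub>m d * A ^\<^sub>m (Suc j)"
    proof -
      have "B * A ^\<^sub>m (Suc j) = A ^\<^sub>m (Suc j) * B" by (rule commute_pow[OF B A comm[symmetric]])
      from commute_pow[OF Ak B this[symmetric]] show ?thesis .
    qed
    have "A ^\<^sub>m (Suc (Suc j)) *\<^sub>v v = (A ^\<^sub>m (Suc j) * A) *\<^sub>v v" by simp
    also have "\<dots> = A ^\<^sub>m (Suc j) *\<^sub>v (A *\<^sub>v v)" by (rule assoc_mult_mat_vec[OF Ak A Suc(2)])
    also have "\<dots> = (A ^\<^sub>m (Suc j) * B ^\<^sub>m d) *\<^sub>v z1" unfolding Av by (rule assoc_mult_mat_vec[OF Ak Bk z1, symmetric])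
    also have "\<dots> = B ^\<^sub>m d *\<^sub>v (A ^\<^sub>m (Suc j) *\<^sub>v z1)" unfolding comm' by (rule assoc_mult_mat_vec[OF Bk Ak z1])
    also have "\<dots> = (B ^\<^sub>m d * B ^\<^sub>m (Suc j * d)) *\<^sub>v z2" unfolding Az1 by (rule assoc_mult_mat_vec[OF Bk Bk z2, symmetric])
    also have "B ^\<^sub>m d * B ^\<^sub>m (Suc j * d) = B ^\<^sub>m (Suc (Suc j) * d)"
      unfolding pow_mat_add[OF B, symmetric] by (simp add: algebra_simps)
    finally show ?case using z2 z2l by blast
  qed
  define m where "m = nat \<lceil>real l2 / real d\<rceil>"
  have ceil: "\<lceil>real l2 / real d\<rceil> \<ge> 1" using l2 d0 by (simp add: divide_pos_pos)
  hence m1: "m \<ge> 1" unfolding m_def by linarith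
  have "real m \<ge> real l2 / real d" unfolding m_def using ceil by linarith
  hence "real m * real d \<ge> real l2" using d0 by (simp add: field_simps)
  hence md: "m * d \<ge> l2" by (metis of_nat_le_iff of_nat_mult)
  have Am: "A ^\<^sub>m m = 0\<^sub>m n n"
  proof (rule mat_zero_if_vec[OF Ak])
    fix v :: "'a vec" assume v: "v \<in> carrier_vec n"
    from m1 obtain j where mj: "m = Suc j" by (cases m, auto)
    from H[OF v, of j] obtain z where z: "z \<in> carrier_vec n" and zl: "B ^\<^sub>m l2 *\<^sub>v z = 0\<^sub>v n"
      and Av: "A ^\<^sub>m (Suc j) *\<^sub>v v = B ^\<^sub>m (Suc j * d) *\<^sub>v z" by blast
    have "A ^\<^sub>m m *\<^sub>v v = B ^\<^sub>m ((m * d - l2) + l2) *\<^sub>v z" unfolding mj Av using md mj by simp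
    also have "\<dots> = B ^\<^sub>m (m * d - l2) *\<^sub>v (B ^\<^sub>m l2 *\<^sub>v z)"
      unfolding pow_mat_add[OF B] using assoc_mult_mat_vec[OF Bk Bk z] by simp
    also have "\<dots> = 0\<^sub>v n" unfolding zl by (rule mat_vec_zero[OF Bk])
    finally show "A ^\<^sub>m m *\<^sub>v v = 0\<^sub>v n" .
  qed
  have "kernel_dim (A ^\<^sub>m m) = n" unfolding Am by (rule kernel_dim_zero)
  hence h: "sum_list (map (min m) (map fst nsA)) \<ge> sum_list (map fst nsA)" using jA(4)[of m] jA(3) by linarith
  have "\<forall>x\<in>set (map fst nsA). x \<le> m" by (rule sum_min_ge[OF h])
  moreover have "sh A ! 0 \<in> set (map fst nsA)"
  proof -
    have "length (sh A) > 0" using s by linarith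
    hence "sh A ! 0 \<in> set (sh A)" by simp
    thus ?thesis unfolding shA by simp
  qed
  ultimately have "sh A ! 0 \<le> m" by blast
  hence "int (sh A ! 0) \<le> int m" by simp
  also have "int m = \<lceil>real l2 / real d\<rceil>" unfolding m_def using ceil by simp
  finally show ?thesis unfolding d_def s_def .
qed


end
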